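(* Let $q \geq 1$ and let $k$ be a positive integer with $k < n$. Let $\boldsymbol{B}$ be a dictionary as described in the context, and assume that every signal $\boldsymbol{y}\in\mathbb{R}^D$ that admits a $k$-block-sparse representation admits a unique one. If $$\Big(k\sqrt{\frac{1+\sigma_q}{1+\epsilon_q}} + k - 1\Big)\mu_S < \frac{1-\epsilon_q}{1+\epsilon_q},$$ then for every $\Lambda_k\subseteq\{1,\dots,n\}$ with $|\Lambda_k|=k$ and every $\boldsymbol{y}\in\bigoplus_{i\in\Lambda_k}\mathcal{S}_i$, every optimal solution $\boldsymbol{c}^*$ of $P_{\ell_q/\ell_1}(\boldsymbol{y})$ satisfies $\boldsymbol{c}^*[i]=\boldsymbol{0}$ for all $i\notin\Lambda_k$; i.e. the solution of $P_{\ell_q/\ell_1}$ is equivalent to that of $P_{\ell_q/\ell_0}$.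
   Context: $\boldsymbol{B} = [\boldsymbol{B}[1]\ \cdots\ \boldsymbol{B}[n]] \in \mathbb{R}^{D\times N}$ has unit-Euclidean-norm columns, blocks $\boldsymbol{B}[i] \in \mathbb{R}^{D\times m_i}$ (possibly with linearly dependent columns); $\mathcal{S}_i = \operatorname{span}(\boldsymbol{B}[i])$ has dimension $d_i$, and $\mathcal{S}_i\cap\mathcal{S}_j = \{0\}$ for $i\ne j$. Vectors $\boldsymbol{c}\in\mathbb{R}^N$ are written $(\boldsymbol{c}[1];\dots;\boldsymbol{c}[n])$, $\boldsymbol{c}[i]\in\mathbb{R}^{m_i}$. A $k$-block-sparse representation of $\boldsymbol{y}$ is $\boldsymbol{y}=\sum_{i\in\Lambda}\boldsymbol{s}_i$ with $|\Lambda|\le k$, $\boldsymbol{s}_i\in\mathcal{S}_i\setminus\{0\}$; uniqueness means any two have the same $\Lambda$ and the same $\boldsymbol{s}_i$. $P_{\ell_q/\ell_1}(\boldsymbol{y})$: $\min \sum_i \|\boldsymbol{c}[i]\|_q$ s.t. $\boldsymbol{y}=\boldsymbol{B}\boldsymbol{c}$; $P_{\ell_q/\ell_0}(\boldsymbol{y})$: minimize the number of nonzero blocks $\boldsymbol{c}[i]$ s.t. $\boldsymbol{y}=\boldsymbol{B}\boldsymbol{c}$. Subspace coherence: $\mu(\mathcal{S}_i,\mathcal{S}_j)=\max_{0\ne\boldsymbol{x}\in\mathcal{S}_i,\,0\ne\boldsymbol{z}\in\mathcal{S}_j}\frac{|\boldsymbol{x}^\top\boldsymbol{z}|}{\|\boldsymbol{x}\|_2\|\boldsymbol{z}\|_2}$;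 mutual subspace coherence $\mu_S=\max_{i\ne j}\mu(\mathcal{S}_i,\mathcal{S}_j)$. $\epsilon_q$: the smallest constant such that for every $i$ there is a full column-rank submatrix $\bar{\boldsymbol{B}}[i]\in\mathbb{R}^{D\times d_i}$ of $\boldsymbol{B}[i]$ with $(1-\epsilon_q)\|\bar{\boldsymbol{c}}\|_q^2 \le \|\bar{\boldsymbol{B}}[i]\bar{\boldsymbol{c}}\|_2^2 \le (1+\epsilon_q)\|\bar{\boldsymbol{c}}\|_q^2$ for all $\bar{\boldsymbol{c}}\in\mathbb{R}^{d_i}$. $\sigma_q$: the smallest constant such that $\|\boldsymbol{B}[i]\boldsymbol{c}[i]\|_2^2\le(1+\sigma_q)\|\boldsymbol{c}[i]\|_q^2$ for all $i$ and all $\boldsymbol{c}[i]$. *)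

theory Defs
  imports "HOL-Analysis.Analysis"
begin

text \<open>Block dictionary: blocks are indexed by i < n, block i has columns
  B i j (j < m i) in R^D (type real ^ 'd). Coefficient vectors are
  c :: nat \<Rightarrow> nat \<Rightarrow> real with c i j the j-th entry of block c[i].\<close>

definition lq_norm :: "real \<Rightarrow> nat set \<Rightarrow> (nat \<Rightarrow> real) \<Rightarrow> real" where
  "lq_norm q J c = (\<Sum>j\<in>J. \<bar>c j\<bar> powr q) powr (1 / q)"

definition block_span :: "(nat \<Rightarrow> nat \<Rightarrow> real ^ 'd) \<Rightarrow> (nat \<Rightarrow> nat) \<Rightarrow> nat \<Rightarrow> (real ^ 'd) set" where
  "block_span B m i = span ((B i) ` {..<m i})"

definition dict_apply :: "nat \<Rightarrow> (nat \<Rightarrow> nat) \<Rightarrow> (nat \<Rightarrow> nat \<Rightarrow> real ^ 'd) \<Rightarrow> (nat \<Rightarrow> nat \<Rightarrow> real) \<Rightarrow> real ^ 'd" where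
  "dict_apply n m B c = (\<Sum>i<n. \<Sum>j<m i. c i j *\<^sub>R B i j)"

definition mutual_subspace_coherence :: "nat \<Rightarrow> (nat \<Rightarrow> nat) \<Rightarrow> (nat \<Rightarrow> nat \<Rightarrow> real ^ 'd) \<Rightarrow> real" where
  "mutual_subspace_coherence n m B =
     Sup {\<bar>x \<bullet> z\<bar> / (norm x * norm z) | i j x z.
            i < n \<and> j < n \<and> i \<noteq> j \<and> x \<in> block_span B m i \<and> z \<in> block_span B m j
            \<and> x \<noteq> 0 \<and> z \<noteq> 0}"

definition sigma_q :: "real \<Rightarrow> nat \<Rightarrow> (nat \<Rightarrow> nat) \<Rightarrow> (nat \<Rightarrow> nat \<Rightarrow> real ^ 'd) \<Rightarrow> real" where
  "sigma_q q n m B =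
     Inf {s. \<forall>i<n. \<forall>c :: nat \<Rightarrow> real.
            (norm (\<Sum>j<m i. c j *\<^sub>R B i j))\<^sup>2 \<le> (1 + s) * (lq_norm q {..<m i} c)\<^sup>2}"

definition epsilon_q :: "real \<Rightarrow> nat \<Rightarrow> (nat \<Rightarrow> nat) \<Rightarrow> (nat \<Rightarrow> nat \<Rightarrow> real ^ 'd) \<Rightarrow> real" where
  "epsilon_q q n m B =
     Inf {e. \<forall>i<n. \<exists>J. J \<subseteq> {..<m i} \<and> card J = dim (block_span B m i)
            \<and> (\<forall>c :: nat \<Rightarrow> real. (\<Sum>j\<in>J. c j *\<^sub>R B i j) = 0 \<longrightarrow> (\<forall>j\<in>J. c j = 0))
            \<and> (\<forall>c :: nat \<Rightarrow> real.
                 (1 - e) * (lq_norm q J c)\<^sup>2 \<le> (norm (\<Sum>j\<in>J. c j *\<^sub>R B i j))\<^sup>2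
               \<and> (norm (\<Sum>j\<in>J. c j *\<^sub>R B i j))\<^sup>2 \<le> (1 + e) * (lq_norm q J c)\<^sup>2)}"

definition kbs_rep :: "nat \<Rightarrow> (nat \<Rightarrow> nat) \<Rightarrow> (nat \<Rightarrow> nat \<Rightarrow> real ^ 'd) \<Rightarrow> nat \<Rightarrow> real ^ 'd
     \<Rightarrow> nat set \<Rightarrow> (nat \<Rightarrow> real ^ 'd) \<Rightarrow> bool" where
  "kbs_rep n m B k y \<Lambda> s \<longleftrightarrow> \<Lambda> \<subseteq> {..<n} \<and> card \<Lambda> \<le> k
     \<and> (\<forall>i\<in>\<Lambda>. s i \<in> block_span B m i \<and> s i \<noteq> 0) \<and> y = (\<Sum>i\<in>\<Lambda>. s i)"

definition unique_kbs :: "nat \<Rightarrow> (nat \<Rightarrow> nat) \<Rightarrow> (nat \<Rightarrow> nat \<Rightarrow> real ^ 'd) \<Rightarrow> nat \<Rightarrow> bool" where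
  "unique_kbs n m B k \<longleftrightarrow> (\<forall>y \<Lambda> s \<Lambda>' s'. kbs_rep n m B k y \<Lambda> s \<and> kbs_rep n m B k y \<Lambda>' s'
      \<longrightarrow> \<Lambda> = \<Lambda>' \<and> (\<forall>i\<in>\<Lambda>. s i = s' i))"

definition lq_l1_optimal :: "real \<Rightarrow> nat \<Rightarrow> (nat \<Rightarrow> nat) \<Rightarrow> (nat \<Rightarrow> nat \<Rightarrow> real ^ 'd) \<Rightarrow> real ^ 'd
     \<Rightarrow> (nat \<Rightarrow> nat \<Rightarrow> real) \<Rightarrow> bool" where
  "lq_l1_optimal q n m B y c \<longleftrightarrow> dict_apply n m B c = y \<and>
     (\<forall>c'. dict_apply n m B c' = y \<longrightarrow>
        (\<Sum>i<n. lq_norm q {..<m i} (c i)) \<le> (\<Sum>i<n. lq_norm q {..<m i} (c' i)))"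

end

theory Submission
  imports Defs
begin


lemma lq_nonneg: "0 \<le> lq_norm q J c"
  by (simp add: lq_norm_def)

lemma lq_ge_abs:
  assumes "finite J" "j \<in> J" "q > 0"
  shows "\<bar>c j\<bar> \<le> lq_norm q J c"
proof -
  have "\<bar>c j\<bar> = (\<bar>c j\<bar> powr q) powr (1/q)"
    using assms by (simp add: powr_powr)
  also have "\<dots> \<le> (\<Sum>l\<in>J. \<bar>c l\<bar> powr q) powr (1/q)"
    apply (rule powr_mono2)
    using assms by (auto intro!: member_le_sum)
  finally show ?thesis by (simp add: lq_norm_def)
qed

lemma lq_zero: "(\<And>j. j \<in> J \<Longrightarrow> c j = 0) \<Longrightarrow> lq_norm q J c = 0"
  by (simp add: lq_norm_def)

lemma lq_cong: "(\<And>j. j \<in> J \<Longrightarrow> c j = d j) \<Longrightarrow> lq_norm q J c = lq_norm q J d"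
  unfolding lq_norm_def by (metis (no_types, lifting) sum.cong)

lemma lq_indicator:
  assumes "finite J" "j \<in> J" "q > 0"
  shows "lq_norm q J (\<lambda>l. if l = j then 1 else 0) = 1"
proof -
  have "(\<Sum>l\<in>J. \<bar>(if l = j then 1 else 0::real)\<bar> powr q) = (\<Sum>l\<in>J. if l = j then 1 else 0)"
    by (rule sum.cong) auto
  also have "\<dots> = 1" using assms by simp
  finally show ?thesis by (simp add: lq_norm_def)
qed

lemma lq_subset:
  assumes "finite K" "J \<subseteq> K" "\<And>j. j \<in> K - J \<Longrightarrow> d j = 0"
  shows "lq_norm q K d = lq_norm q J d"
proof -
  have "(\<Sum>l\<in>K. \<bar>d l\<bar> powr q) = (\<Sum>l\<in>J. \<bar>d l\<bar> powr q)"
    using assms by (intro sum.mono_neutral_right) auto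
  then show ?thesis by (simp add: lq_norm_def)
qed

lemma norm_sum_le_lq:
  fixes v :: "nat \<Rightarrow> 'a::real_normed_vector"
  assumes "finite J" "q > 0" "\<And>j. j \<in> J \<Longrightarrow> norm (v j) \<le> 1"
  shows "norm (\<Sum>j\<in>J. c j *\<^sub>R v j) \<le> real (card J) * lq_norm q J c"
proof -
  have "norm (\<Sum>j\<in>J. c j *\<^sub>R v j) \<le> (\<Sum>j\<in>J. norm (c j *\<^sub>R v j))" by (rule norm_sum)
  also have "\<dots> \<le> (\<Sum>j\<in>J. lq_norm q J c)"
  proof (rule sum_mono)
    fix j assume j: "j \<in> J"
    have "norm (c j *\<^sub>R v j) = \<bar>c j\<bar> * norm (v j)" by simp
    also have "\<dots> \<le> \<bar>c j\<bar> * 1" using assms(3)[OF j] by (intro mult_left_mono) auto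
    also have "\<dots> \<le> lq_norm q J c" using lq_ge_abs[OF assms(1) j assms(2)] by simp
    finally show "norm (c j *\<^sub>R v j) \<le> lq_norm q J c" .
  qed
  finally show ?thesis by simp
qed

lemma pow_convex0:
  fixes u v t q :: real
  assumes "q \<ge> 1" "0 \<le> u" "0 \<le> v" "0 \<le> t" "t \<le> 1"
  shows "((1 - t) * u + t * v) powr q \<le> (1 - t) * u powr q + t * v powr q"
proof (cases "u > 0 \<and> v > 0")
  case True
  then show ?thesis using convex_onD[OF powr_convex[OF assms(1)], of t u v] assms by auto
next
  case False
  have key: "(s * w) powr q \<le> s * w powr q" if "0 \<le> s" "s \<le> 1" "0 \<le> w" for s w :: real
  proof -
    have "(s * w) powr q = s powr q * w powr q" using that by (simp add: powr_mult)
    also have "\<dots> \<le> s * w powr q"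
    proof (rule mult_right_mono)
      show "s powr q \<le> s"
      proof (cases "s = 0")
        case False
        then have "s powr q \<le> s powr 1" using that assms(1) by (intro powr_mono') auto
        then show ?thesis using that by simp
      qed simp
    qed simp
    finally show ?thesis .
  qed
  show ?thesis
  proof (cases "u = 0")
    case True
    then show ?thesis using key[of t v] assms by simp
  next
    case False
    then have "v = 0" using \<open>\<not> (u > 0 \<and> v > 0)\<close> assms by auto
    then show ?thesis using key[of "1 - t" u] assms by simp
  qed
qed



lemma lq_pow: assumes "q > 0" shows "lq_norm q J c powr q = (\<Sum>j\<in>J. \<bar>c j\<bar> powr q)"
  using assms by (simp add: lq_norm_def powr_powr sum_nonneg)

lemma lq_eq0:
  assumes "finite J" "q > 0" "lq_norm q J c = 0" "j \<in> J" shows "c j = 0"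
  using lq_ge_abs[OF assms(1,4,2), of c] assms(3) by simp

lemma lq_minkowski:
  assumes fin: "finite J" and q: "q \<ge> 1"
  shows "lq_norm q J (\<lambda>j. c j + d j) \<le> lq_norm q J c + lq_norm q J d"
proof -
  define a where "a = lq_norm q J c"
  define b where "b = lq_norm q J d"
  have q0: "q > 0" using q by simp
  have a0: "a \<ge> 0" "b \<ge> 0" unfolding a_def b_def by (simp_all add: lq_nonneg)
  show ?thesis
  proof (cases "a = 0 \<or> b = 0")
    case True
    then show ?thesis
    proof
      assume "a = 0"
      then have "\<And>j. j \<in> J \<Longrightarrow> c j = 0" using lq_eq0[OF fin q0] a_def by metis
      then have "lq_norm q J (\<lambda>j. c j + d j) = lq_norm q J d" by (intro lq_cong) simp
      then show ?thesis using a0 a_def by simp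
    next
      assume "b = 0"
      then have "\<And>j. j \<in> J \<Longrightarrow> d j = 0" using lq_eq0[OF fin q0] b_def by metis
      then have "lq_norm q J (\<lambda>j. c j + d j) = lq_norm q J c" by (intro lq_cong) simp
      then show ?thesis using a0 b_def by simp
    qed
  next
    case False
    then have ap: "a > 0" "b > 0" using a0 by auto
    define t where "t = b / (a + b)"
    have t: "0 \<le> t" "t \<le> 1" "1 - t = a / (a + b)" using ap by (auto simp: t_def field_simps)
    have pa: "a powr q = (\<Sum>j\<in>J. \<bar>c j\<bar> powr q)" unfolding a_def by (rule lq_pow[OF q0])
    have pb: "b powr q = (\<Sum>j\<in>J. \<bar>d j\<bar> powr q)" unfolding b_def by (rule lq_pow[OF q0])
    have pt: "\<bar>c j + d j\<bar> powr q \<le> (a + b) powr q *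
        ((1 - t) * (\<bar>c j\<bar> powr q / a powr q) + t * (\<bar>d j\<bar> powr q / b powr q))" for j
    proof -
      have e: "\<bar>c j\<bar> + \<bar>d j\<bar> = (a + b) * ((1 - t) * (\<bar>c j\<bar> / a) + t * (\<bar>d j\<bar> / b))"
      proof -
        have f1: "(a + b) * (1 - t) / a = 1" "(a + b) * t / b = 1" using ap unfolding t(3) by (simp_all add: t_def)
        have "(a + b) * ((1 - t) * (\<bar>c j\<bar> / a) + t * (\<bar>d j\<bar> / b)) =
          ((a + b) * (1 - t) / a) * \<bar>c j\<bar> + ((a + b) * t / b) * \<bar>d j\<bar>"
          by (simp add: algebra_simps)
        then show ?thesis using f1 by simp
      qed
      have "\<bar>c j + d j\<bar> powr q \<le> (\<bar>c j\<bar> + \<bar>d j\<bar>) powr q"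
        using q0 by (intro powr_mono2) auto
      also have "\<dots> = (a + b) powr q * ((1 - t) * (\<bar>c j\<bar> / a) + t * (\<bar>d j\<bar> / b)) powr q"
        unfolding e using ap t by (subst powr_mult) auto
      also have "\<dots> \<le> (a + b) powr q * ((1 - t) * (\<bar>c j\<bar> / a) powr q + t * (\<bar>d j\<bar> / b) powr q)"
        using ap t q by (intro mult_left_mono pow_convex0) auto
      also have "\<dots> = (a + b) powr q *
        ((1 - t) * (\<bar>c j\<bar> powr q / a powr q) + t * (\<bar>d j\<bar> powr q / b powr q))"
        using ap by (simp add: powr_divide)
      finally show ?thesis .
    qed
    have "(\<Sum>j\<in>J. \<bar>c j + d j\<bar> powr q) \<le> (\<Sum>j\<in>J. (a + b) powr q *
        ((1 - t) * (\<bar>c j\<bar> powr q / a powr q) + t * (\<bar>d j\<bar> powr q / b powr q)))"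
      by (rule sum_mono) (rule pt)
    also have "\<dots> = (a + b) powr q * ((1 - t) * ((\<Sum>j\<in>J. \<bar>c j\<bar> powr q) / a powr q)
        + t * ((\<Sum>j\<in>J. \<bar>d j\<bar> powr q) / b powr q))"
      by (simp add: sum_distrib_left[symmetric] sum.distrib sum_divide_distrib[symmetric] distrib_left)
    also have "\<dots> = (a + b) powr q"
      unfolding pa[symmetric] pb[symmetric] using ap by simp
    finally have "(\<Sum>j\<in>J. \<bar>c j + d j\<bar> powr q) \<le> (a + b) powr q" .
    then have "(\<Sum>j\<in>J. \<bar>c j + d j\<bar> powr q) powr (1/q) \<le> ((a + b) powr q) powr (1/q)"
      using q0 by (intro powr_mono2) (auto intro: sum_nonneg)
    also have "\<dots> = a + b" using ap q0 by (simp add: powr_powr)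
    finally show ?thesis by (simp add: lq_norm_def a_def b_def)
  qed
qed



lemma basis_span:
  fixes B :: "nat \<Rightarrow> nat \<Rightarrow> real ^ 'd"
  assumes J: "J \<subseteq> {..<m i}" "card J = dim (block_span B m i)"
    and ind: "\<forall>c :: nat \<Rightarrow> real. (\<Sum>j\<in>J. c j *\<^sub>R B i j) = 0 \<longrightarrow> (\<forall>j\<in>J. c j = 0)"
    and s: "s \<in> block_span B m i"
  shows "\<exists>g. (\<Sum>j\<in>J. g j *\<^sub>R B i j) = s"
proof -
  have finJ: "finite J" using J(1) finite_subset by blast
  have inj: "inj_on (B i) J"
  proof (rule inj_onI, rule ccontr)
    fix j1 j2 assume j: "j1 \<in> J" "j2 \<in> J" "B i j1 = B i j2" "j1 \<noteq> j2"
    define c where "c = (\<lambda>l. if l = j1 then 1 else if l = j2 then -1 else (0::real))"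
    have "(\<Sum>l\<in>J. c l *\<^sub>R B i l) = (\<Sum>l\<in>{j1, j2}. c l *\<^sub>R B i l)"
      using j finJ by (intro sum.mono_neutral_right) (auto simp: c_def)
    also have "\<dots> = 0" using j by (simp add: c_def)
    finally have "c j1 = 0" using ind j by blast
    then show False by (simp add: c_def)
  qed
  define V where "V = B i ` J"
  have finV: "finite V" using finJ V_def by simp
  have indV: "independent V"
    unfolding independent_explicit
  proof (intro conjI allI impI ballI)
    show "finite V" by (rule finV)
    fix c v assume c: "(\<Sum>v\<in>V. c v *\<^sub>R v) = 0" and v: "v \<in> V"
    have "(\<Sum>j\<in>J. c (B i j) *\<^sub>R B i j) = (\<Sum>v\<in>V. c v *\<^sub>R v)"
      unfolding V_def using inj by (simp add: sum.reindex)
    then have "\<forall>j\<in>J. c (B i j) = 0" using ind c by metis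
    then show "c v = 0" using v V_def by auto
  qed
  have cardV: "card V = dim (block_span B m i)" using inj J V_def by (simp add: card_image)
  have VS: "V \<subseteq> block_span B m i"
    unfolding V_def block_span_def using J(1) by (auto intro: span_base)
  have "block_span B m i \<subseteq> span V"
    by (rule card_ge_dim_independent[OF VS indV]) (simp add: cardV)
  with s have "s \<in> span V" by blast
  then obtain u where u: "(\<Sum>v\<in>V. u v *\<^sub>R v) = s" using span_finite[OF finV] by auto
  have "(\<Sum>j\<in>J. u (B i j) *\<^sub>R B i j) = s"
    using u inj unfolding V_def by (simp add: sum.reindex)
  then show ?thesis by (intro exI[where x="\<lambda>j. u (B i j)"])
qed



lemma sigma_prop:
  fixes B :: "nat \<Rightarrow> nat \<Rightarrow> real ^ 'd"
  assumes unit: "\<forall>i<n. \<forall>j<m i. norm (B i j) = 1" and q: "q > 0"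
  shows "\<forall>i<n. \<forall>c :: nat \<Rightarrow> real.
            (norm (\<Sum>j<m i. c j *\<^sub>R B i j))\<^sup>2 \<le> (1 + sigma_q q n m B) * (lq_norm q {..<m i} c)\<^sup>2"
proof -
  define S where "S = {s. \<forall>i<n. \<forall>c :: nat \<Rightarrow> real.
            (norm (\<Sum>j<m i. c j *\<^sub>R B i j))\<^sup>2 \<le> (1 + s) * (lq_norm q {..<m i} c)\<^sup>2}"
  have sig: "sigma_q q n m B = Inf S" unfolding S_def sigma_q_def by simp
  define s0 where "s0 = (\<Sum>i<n. (real (m i))\<^sup>2)"
  have "s0 \<in> S" unfolding S_def
  proof (intro CollectI allI impI)
    fix i c assume i: "i < n"
    have "norm (\<Sum>j<m i. c j *\<^sub>R B i j) \<le> real (card {..<m i}) * lq_norm q {..<m i} c"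
      using unit i q by (intro norm_sum_le_lq) auto
    then have "(norm (\<Sum>j<m i. c j *\<^sub>R B i j))\<^sup>2 \<le> (real (m i) * lq_norm q {..<m i} c)\<^sup>2"
      by (intro power_mono) auto
    also have "\<dots> = (real (m i))\<^sup>2 * (lq_norm q {..<m i} c)\<^sup>2" by (simp add: power_mult_distrib)
    also have "\<dots> \<le> (1 + s0) * (lq_norm q {..<m i} c)\<^sup>2"
    proof (rule mult_right_mono)
      have "(real (m i))\<^sup>2 \<le> s0" unfolding s0_def using i
        by (intro member_le_sum) auto
      then show "(real (m i))\<^sup>2 \<le> 1 + s0" by simp
    qed simp
    finally show "(norm (\<Sum>j<m i. c j *\<^sub>R B i j))\<^sup>2 \<le> (1 + s0) * (lq_norm q {..<m i} c)\<^sup>2" .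
  qed
  then have ne: "S \<noteq> {}" by blast
  show ?thesis
  proof (intro allI impI)
    fix i c assume i: "i < n"
    let ?N = "(norm (\<Sum>j<m i. c j *\<^sub>R B i j))\<^sup>2" and ?L = "lq_norm q {..<m i} c"
    show "?N \<le> (1 + sigma_q q n m B) * ?L\<^sup>2"
    proof (cases "?L = 0")
      case True
      then have "\<And>j. j \<in> {..<m i} \<Longrightarrow> c j = 0" using lq_eq0[OF _ q] by blast
      then have "(\<Sum>j<m i. c j *\<^sub>R B i j) = 0" by simp
      then show ?thesis using True by simp
    next
      case False
      then have Lp: "?L\<^sup>2 > 0" using lq_nonneg[of q "{..<m i}" c] by simp
      have "?N / ?L\<^sup>2 - 1 \<le> Inf S"
      proof (rule cInf_greatest[OF ne])
        fix s assume "s \<in> S"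
        then have "?N \<le> (1 + s) * ?L\<^sup>2" unfolding S_def using i by blast
        then show "?N / ?L\<^sup>2 - 1 \<le> s" using Lp by (simp add: field_simps)
      qed
      then show ?thesis using Lp sig by (simp add: field_simps)
    qed
  qed
qed

lemma sigma_nonneg:
  fixes B :: "nat \<Rightarrow> nat \<Rightarrow> real ^ 'd"
  assumes unit: "\<forall>i<n. \<forall>j<m i. norm (B i j) = 1" and q: "q > 0" and n: "0 < n" and m: "0 < m 0"
  shows "0 \<le> sigma_q q n m B"
proof -
  define c where "c = (\<lambda>l. if l = (0::nat) then 1 else (0::real))"
  have "(\<Sum>j<m 0. c j *\<^sub>R B 0 j) = B 0 0"
  proof -
    have "(\<Sum>j<m 0. c j *\<^sub>R B 0 j) = (\<Sum>j<m 0. if j = 0 then B 0 j else 0)"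
      by (rule sum.cong) (auto simp: c_def)
    then show ?thesis using m by simp
  qed
  moreover have "lq_norm q {..<m 0} c = 1" unfolding c_def using m q by (intro lq_indicator) auto
  ultimately have "(norm (B 0 0))\<^sup>2 \<le> (1 + sigma_q q n m B) * 1\<^sup>2"
    using sigma_prop[OF unit q] n by metis
  then show ?thesis using n m unit by simp
qed



definition epsset :: "real \<Rightarrow> nat \<Rightarrow> (nat \<Rightarrow> nat) \<Rightarrow> (nat \<Rightarrow> nat \<Rightarrow> real ^ 'd) \<Rightarrow> real set" where
  "epsset q n m B =
     {e. \<forall>i<n. \<exists>J. J \<subseteq> {..<m i} \<and> card J = dim (block_span B m i)
            \<and> (\<forall>c :: nat \<Rightarrow> real. (\<Sum>j\<in>J. c j *\<^sub>R B i j) = 0 \<longrightarrow> (\<forall>j\<in>J. c j = 0))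
            \<and> (\<forall>c :: nat \<Rightarrow> real.
                 (1 - e) * (lq_norm q J c)\<^sup>2 \<le> (norm (\<Sum>j\<in>J. c j *\<^sub>R B i j))\<^sup>2
               \<and> (norm (\<Sum>j\<in>J. c j *\<^sub>R B i j))\<^sup>2 \<le> (1 + e) * (lq_norm q J c)\<^sup>2)}"

lemma eps_inf: "epsilon_q q n m B = Inf (epsset q n m B)"
  by (simp add: epsilon_q_def epsset_def)

lemma eps_ne:
  fixes B :: "nat \<Rightarrow> nat \<Rightarrow> real ^ 'd"
  assumes unit: "\<forall>i<n. \<forall>j<m i. norm (B i j) = 1" and q: "q > 0"
  shows "epsset q n m B \<noteq> {}"
proof -
  define e0 where "e0 = 1 + (\<Sum>i<n. (real (m i))\<^sup>2)"
  have "e0 \<in> epsset q n m B" unfolding epsset_def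
  proof (intro CollectI allI impI)
    fix i assume i: "i < n"
    define V where "V = B i ` {..<m i}"
    obtain W where W: "W \<subseteq> V" "independent W" "V \<subseteq> span W" "card W = dim V"
      using basis_exists by blast
    obtain U where U: "U \<subseteq> {..<m i}" "inj_on (B i) U" "W = B i ` U"
      using W(1) unfolding V_def subset_image_inj by blast
    have finU: "finite U" using U(1) finite_subset by blast
    have cardU: "card U = dim (block_span B m i)"
      using W(4) U card_image unfolding block_span_def V_def dim_span by metis
    have indU: "\<forall>c :: nat \<Rightarrow> real. (\<Sum>j\<in>U. c j *\<^sub>R B i j) = 0 \<longrightarrow> (\<forall>j\<in>U. c j = 0)"
    proof (intro allI impI ballI)
      fix c :: "nat \<Rightarrow> real" and j assume c: "(\<Sum>j\<in>U. c j *\<^sub>R B i j) = 0" and j: "j \<in> U"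
      define c' where "c' = (\<lambda>v. c (inv_into U (B i) v))"
      have "(\<Sum>v\<in>W. c' v *\<^sub>R v) = (\<Sum>j\<in>U. c' (B i j) *\<^sub>R B i j)"
        unfolding U(3) using U(2) by (simp add: sum.reindex)
      also have "\<dots> = (\<Sum>j\<in>U. c j *\<^sub>R B i j)"
        using U(2) by (intro sum.cong) (auto simp: c'_def)
      finally have "(\<Sum>v\<in>W. c' v *\<^sub>R v) = 0" using c by simp
      then have "c' (B i j) = 0" using W(2) j U(3) unfolding independent_explicit by blast
      then show "c j = 0" using U(2) j by (simp add: c'_def)
    qed
    have bnd: "(1 - e0) * (lq_norm q U c)\<^sup>2 \<le> (norm (\<Sum>j\<in>U. c j *\<^sub>R B i j))\<^sup>2
               \<and> (norm (\<Sum>j\<in>U. c j *\<^sub>R B i j))\<^sup>2 \<le> (1 + e0) * (lq_norm q U c)\<^sup>2" for c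
    proof
      have "e0 \<ge> 1" unfolding e0_def by (simp add: sum_nonneg)
      then have "(1 - e0) * (lq_norm q U c)\<^sup>2 \<le> 0" by (intro mult_nonpos_nonneg) auto
      then show "(1 - e0) * (lq_norm q U c)\<^sup>2 \<le> (norm (\<Sum>j\<in>U. c j *\<^sub>R B i j))\<^sup>2"
        by (meson order_trans zero_le_power2)
      have "norm (\<Sum>j\<in>U. c j *\<^sub>R B i j) \<le> real (card U) * lq_norm q U c"
        using unit i q U(1) finU by (intro norm_sum_le_lq) auto
      also have "\<dots> \<le> real (m i) * lq_norm q U c"
      proof (rule mult_right_mono)
        have "card U \<le> card {..<m i}" using U(1) by (intro card_mono) auto
        then show "real (card U) \<le> real (m i)" by simp
      qed (simp add: lq_nonneg)
      finally have "(norm (\<Sum>j\<in>U. c j *\<^sub>R B i j))\<^sup>2 \<le> (real (m i) * lq_norm q U c)\<^sup>2"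
        by (intro power_mono) auto
      also have "\<dots> = (real (m i))\<^sup>2 * (lq_norm q U c)\<^sup>2" by (simp add: power_mult_distrib)
      also have "\<dots> \<le> (1 + e0) * (lq_norm q U c)\<^sup>2"
      proof (rule mult_right_mono)
        have "(real (m i))\<^sup>2 \<le> (\<Sum>i<n. (real (m i))\<^sup>2)" using i
          by (intro member_le_sum) auto
        then show "(real (m i))\<^sup>2 \<le> 1 + e0" unfolding e0_def by simp
      qed simp
      finally show "(norm (\<Sum>j\<in>U. c j *\<^sub>R B i j))\<^sup>2 \<le> (1 + e0) * (lq_norm q U c)\<^sup>2" .
    qed
    show "\<exists>J. J \<subseteq> {..<m i} \<and> card J = dim (block_span B m i)
            \<and> (\<forall>c :: nat \<Rightarrow> real. (\<Sum>j\<in>J. c j *\<^sub>R B i j) = 0 \<longrightarrow> (\<forall>j\<in>J. c j = 0))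
            \<and> (\<forall>c :: nat \<Rightarrow> real.
                 (1 - e0) * (lq_norm q J c)\<^sup>2 \<le> (norm (\<Sum>j\<in>J. c j *\<^sub>R B i j))\<^sup>2
               \<and> (norm (\<Sum>j\<in>J. c j *\<^sub>R B i j))\<^sup>2 \<le> (1 + e0) * (lq_norm q J c)\<^sup>2)"
      using U(1) cardU indU bnd by blast
  qed
  then show ?thesis by blast
qed

lemma eps_elem_nonneg:
  fixes B :: "nat \<Rightarrow> nat \<Rightarrow> real ^ 'd"
  assumes unit: "\<forall>i<n. \<forall>j<m i. norm (B i j) = 1" and q: "q > 0" and n: "0 < n" and m: "0 < m 0"
    and e: "e \<in> epsset q n m B"
  shows "0 \<le> e"
proof -
  obtain J where J: "J \<subseteq> {..<m 0}" "card J = dim (block_span B m 0)"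
     "\<forall>c :: nat \<Rightarrow> real.
                 (1 - e) * (lq_norm q J c)\<^sup>2 \<le> (norm (\<Sum>j\<in>J. c j *\<^sub>R B 0 j))\<^sup>2
               \<and> (norm (\<Sum>j\<in>J. c j *\<^sub>R B 0 j))\<^sup>2 \<le> (1 + e) * (lq_norm q J c)\<^sup>2"
    using e n unfolding epsset_def by blast
  have finJ: "finite J" using J(1) finite_subset by blast
  have "B 0 0 \<in> block_span B m 0" unfolding block_span_def using m by (auto intro: span_base)
  moreover have "B 0 0 \<noteq> 0" using unit n m by (metis norm_zero zero_neq_one)
  ultimately have "dim (block_span B m 0) \<noteq> 0" by auto
  then have "J \<noteq> {}" using J(2) by auto
  then obtain j where j: "j \<in> J" by blast
  define c where "c = (\<lambda>l. if l = j then 1 else (0::real))"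
  have "(\<Sum>l\<in>J. c l *\<^sub>R B 0 l) = (\<Sum>l\<in>J. if l = j then B 0 l else 0)"
    by (rule sum.cong) (auto simp: c_def)
  also have "\<dots> = B 0 j" using finJ j by simp
  finally have s: "(\<Sum>l\<in>J. c l *\<^sub>R B 0 l) = B 0 j" .
  have "norm (B 0 j) = 1" using unit n J(1) j by auto
  moreover have "lq_norm q J c = 1" unfolding c_def using finJ j q by (intro lq_indicator)
  ultimately have "1 \<le> 1 + e" using J(3) s by (metis mult_1_right one_power2)
  then show ?thesis by simp
qed

lemma eps_nonneg:
  fixes B :: "nat \<Rightarrow> nat \<Rightarrow> real ^ 'd"
  assumes unit: "\<forall>i<n. \<forall>j<m i. norm (B i j) = 1" and q: "q > 0" and n: "0 < n" and m: "0 < m 0"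
  shows "0 \<le> epsilon_q q n m B"
  unfolding eps_inf using eps_ne[OF unit q] eps_elem_nonneg[OF assms]
  by (intro cInf_greatest) auto

lemma eps_approx:
  fixes B :: "nat \<Rightarrow> nat \<Rightarrow> real ^ 'd"
  assumes unit: "\<forall>i<n. \<forall>j<m i. norm (B i j) = 1" and q: "q > 0" and z: "epsilon_q q n m B < z"
  shows "\<exists>e\<in>epsset q n m B. e < z"
  using cInf_lessD[OF eps_ne[OF unit q]] z eps_inf by metis



lemma mu_bound:
  fixes B :: "nat \<Rightarrow> nat \<Rightarrow> real ^ 'd"
  assumes ij: "i < n" "j < n" "i \<noteq> j" and x: "x \<in> block_span B m i" and z: "z \<in> block_span B m j"
  shows "\<bar>x \<bullet> z\<bar> \<le> mutual_subspace_coherence n m B * norm x * norm z"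
proof (cases "x = 0 \<or> z = 0")
  case True
  then show ?thesis by auto
next
  case False
  define M where "M = {\<bar>x \<bullet> z\<bar> / (norm x * norm z) | i j x z.
            i < n \<and> j < n \<and> i \<noteq> j \<and> x \<in> block_span B m i \<and> z \<in> block_span B m j
            \<and> x \<noteq> 0 \<and> z \<noteq> 0}"
  have mu: "mutual_subspace_coherence n m B = Sup M" unfolding M_def mutual_subspace_coherence_def by simp
  have "bdd_above M"
  proof (rule bdd_aboveI)
    fix v assume "v \<in> M"
    then obtain x z :: "real ^ 'd" where v: "v = \<bar>x \<bullet> z\<bar> / (norm x * norm z)" "x \<noteq> 0" "z \<noteq> 0"
      unfolding M_def by blast
    have "\<bar>x \<bullet> z\<bar> \<le> norm x * norm z" by (rule Cauchy_Schwarz_ineq2)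
    then show "v \<le> 1" using v by (simp add: divide_le_eq_1)
  qed
  moreover have "\<bar>x \<bullet> z\<bar> / (norm x * norm z) \<in> M" unfolding M_def using ij x z False by blast
  ultimately have "\<bar>x \<bullet> z\<bar> / (norm x * norm z) \<le> mutual_subspace_coherence n m B"
    unfolding mu by (rule cSup_upper[rotated])
  then show ?thesis using False by (simp add: divide_le_eq mult.assoc)
qed

lemma mu_nonneg:
  fixes B :: "nat \<Rightarrow> nat \<Rightarrow> real ^ 'd"
  assumes n: "1 < n" and m: "\<forall>i<n. 0 < m i" and unit: "\<forall>i<n. \<forall>j<m i. norm (B i j) = 1"
  shows "0 \<le> mutual_subspace_coherence n m B"
proof -
  have b0: "B 0 0 \<in> block_span B m 0" "B 1 0 \<in> block_span B m 1"
    unfolding block_span_def using m n by (auto intro!: span_base)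
  have "\<bar>B 0 0 \<bullet> B 1 0\<bar> \<le> mutual_subspace_coherence n m B * norm (B 0 0) * norm (B 1 0)"
    using n b0 by (intro mu_bound) auto
  moreover have "norm (B 0 0) = 1" "norm (B 1 0) = 1" using unit m n by auto
  ultimately show ?thesis by (metis abs_ge_zero mult.right_neutral order_trans)
qed



lemma key_real:
  fixes e s mu k :: real
  assumes e: "0 \<le> e" and s: "0 \<le> s" and mu: "0 \<le> mu" and k: "1 \<le> k"
    and cond: "(k * sqrt ((1 + s) / (1 + e)) + k - 1) * mu < (1 - e) / (1 + e)"
  shows "e < 1" "0 < 1 - (k - 1) * mu" "k * mu * sqrt (1 + s) < sqrt (1 - e) * (1 - (k - 1) * mu)"
proof -
  have "0 \<le> k * sqrt ((1 + s) / (1 + e))" using k s e by simp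
  then have "0 \<le> (k * sqrt ((1 + s) / (1 + e)) + k - 1) * mu"
    using k mu by (intro mult_nonneg_nonneg) auto
  then have "0 < (1 - e) / (1 + e)" using cond by linarith
  then show e1: "e < 1" using e by (simp add: zero_less_divide_iff)
  define a where "a = sqrt (1 + e)"
  define b where "b = sqrt (1 - e)"
  define X where "X = k * mu * sqrt (1 + s)"
  have a: "a > 0" "a\<^sup>2 = 1 + e" using e by (simp_all add: a_def)
  have b: "b > 0" "b\<^sup>2 = 1 - e" using e1 by (simp_all add: b_def)
  have ba: "b \<le> a" unfolding a_def b_def using e by simp
  have X0: "X \<ge> 0" using k mu s unfolding X_def by (intro mult_nonneg_nonneg) auto
  have "sqrt ((1 + s) / (1 + e)) = sqrt (1 + s) / a" by (simp add: a_def real_sqrt_divide)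
  then have c1: "X / a + (k - 1) * mu < (1 - e) / (1 + e)"
    using cond unfolding X_def by (simp add: algebra_simps)
  have "b\<^sup>2 / a\<^sup>2 = (1 - e) / (1 + e)" using a b by simp
  then have c2: "X / a + (k - 1) * mu < b\<^sup>2 / a\<^sup>2" using c1 by simp
  have "X + (k - 1) * mu * a < b\<^sup>2 / a"
  proof -
    have "a * (X / a + (k - 1) * mu) < a * (b\<^sup>2 / a\<^sup>2)" by (rule mult_strict_left_mono[OF c2 a(1)])
    then show ?thesis using a by (simp add: algebra_simps power2_eq_square)
  qed
  moreover have "b\<^sup>2 / a \<le> b"
  proof -
    have "b * b \<le> b * a" using ba b by (intro mult_left_mono) auto
    then have "b\<^sup>2 \<le> b * a" by (simp add: power2_eq_square)
    then show ?thesis using a(1) by (simp add: divide_le_eq)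
  qed
  moreover have "(k - 1) * mu * b \<le> (k - 1) * mu * a" using ba k mu by (intro mult_left_mono) auto
  ultimately have "X < b * (1 - (k - 1) * mu)" by (simp add: algebra_simps)
  then show "k * mu * sqrt (1 + s) < sqrt (1 - e) * (1 - (k - 1) * mu)" unfolding X_def b_def .
  then show "0 < 1 - (k - 1) * mu" using X0 b unfolding X_def b_def
    by (smt (verit) zero_less_mult_iff)
qed



theorem corollary2:
  fixes q :: real and n k :: nat and m :: "nat \<Rightarrow> nat" and B :: "nat \<Rightarrow> nat \<Rightarrow> real ^ 'd"
  assumes q: "q \<ge> 1"
    and k: "0 < k" "k < n"
    and m_pos: "\<forall>i<n. 0 < m i"
    and unit: "\<forall>i<n. \<forall>j<m i. norm (B i j) = 1"
    and indep: "\<forall>i<n. \<forall>j<n. i \<noteq> j \<longrightarrow> block_span B m i \<inter> block_span B m j = {0}"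
    and uniq: "unique_kbs n m B k"
    and cond: "(real k * sqrt ((1 + sigma_q q n m B) / (1 + epsilon_q q n m B)) + real k - 1)
                 * mutual_subspace_coherence n m B
               < (1 - epsilon_q q n m B) / (1 + epsilon_q q n m B)"
  shows "\<forall>\<Lambda> y c. \<Lambda> \<subseteq> {..<n} \<and> card \<Lambda> = k
            \<and> y \<in> {\<Sum>i\<in>\<Lambda>. s i | s. \<forall>i\<in>\<Lambda>. s i \<in> block_span B m i}
            \<and> lq_l1_optimal q n m B y c
            \<longrightarrow> (\<forall>i<n. i \<notin> \<Lambda> \<longrightarrow> (\<forall>j<m i. c i j = 0))"
proof (rule allI, rule allI, rule allI, rule impI)
  fix \<Lambda> y c
  assume H: "\<Lambda> \<subseteq> {..<n} \<and> card \<Lambda> = k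
            \<and> y \<in> {\<Sum>i\<in>\<Lambda>. s i | s. \<forall>i\<in>\<Lambda>. s i \<in> block_span B m i}
            \<and> lq_l1_optimal q n m B y c"
  then have Lam: "\<Lambda> \<subseteq> {..<n}" "card \<Lambda> = k" and opt: "lq_l1_optimal q n m B y c" by auto
  from H obtain s0 where s0: "\<forall>i\<in>\<Lambda>. s0 i \<in> block_span B m i" "y = (\<Sum>i\<in>\<Lambda>. s0 i)" by blast
  have q0: "q > 0" using q by simp
  have finL: "finite \<Lambda>" using Lam(1) finite_subset by blast
  have n1: "1 < n" "0 < n" using k by auto
  have m0: "0 < m 0" using m_pos n1 by auto
  define sg where "sg = sigma_q q n m B"
  define ep where "ep = epsilon_q q n m B"
  define mu where "mu = mutual_subspace_coherence n m B"
  have sgp: "\<forall>i<n. \<forall>c :: nat \<Rightarrow> real.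
            (norm (\<Sum>j<m i. c j *\<^sub>R B i j))\<^sup>2 \<le> (1 + sg) * (lq_norm q {..<m i} c)\<^sup>2"
    unfolding sg_def by (rule sigma_prop[OF unit q0])
  have sg0: "0 \<le> sg" unfolding sg_def by (rule sigma_nonneg[OF unit q0 n1(2) m0])
  have ep0: "0 \<le> ep" unfolding ep_def by (rule eps_nonneg[OF unit q0 n1(2) m0])
  have mu0: "0 \<le> mu" unfolding mu_def by (rule mu_nonneg[OF n1(1) m_pos unit])
  have kr: "ep < 1" "0 < 1 - (real k - 1) * mu"
     "real k * mu * sqrt (1 + sg) < sqrt (1 - ep) * (1 - (real k - 1) * mu)"
    using key_real[OF ep0 sg0 mu0, of "real k"] cond k unfolding sg_def ep_def mu_def by auto
  show "\<forall>i<n. i \<notin> \<Lambda> \<longrightarrow> (\<forall>j<m i. c i j = 0)"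
  proof (rule ccontr)
    assume "\<not> (\<forall>i<n. i \<notin> \<Lambda> \<longrightarrow> (\<forall>j<m i. c i j = 0))"
    then obtain i0 j0 where i0: "i0 < n" "i0 \<notin> \<Lambda>" "j0 < m i0" "c i0 j0 \<noteq> 0" by blast
    define L where "L i = lq_norm q {..<m i} (c i)" for i
    define t where "t i = (\<Sum>j<m i. c i j *\<^sub>R B i j)" for i
    define Oc where "Oc = {..<n} - \<Lambda>"
    define C where "C = (\<Sum>i\<in>Oc. L i)"
    define s where "s i = s0 i - t i" for i
    define S where "S = (\<Sum>i\<in>\<Lambda>. norm (s i))"
    have finO: "finite Oc" unfolding Oc_def by simp
    have L0: "0 \<le> L i" for i unfolding L_def by (rule lq_nonneg)
    have t_span: "t i \<in> block_span B m i" for i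
      unfolding t_def block_span_def by (intro span_sum span_scale span_base) auto
    have s_span: "s i \<in> block_span B m i" if "i \<in> \<Lambda>" for i
      unfolding s_def using s0(1) that t_span unfolding block_span_def by (intro span_diff) auto
    have t_norm: "norm (t i) \<le> sqrt (1 + sg) * L i" if "i < n" for i
    proof -
      have "(norm (t i))\<^sup>2 \<le> (1 + sg) * (L i)\<^sup>2" using sgp that unfolding t_def L_def by blast
      then have "norm (t i) \<le> sqrt ((1 + sg) * (L i)\<^sup>2)" by (rule real_le_rsqrt)
      then show ?thesis using L0[of i] by (simp add: real_sqrt_mult)
    qed
    have Cpos: "0 < C"
    proof -
      have "\<bar>c i0 j0\<bar> \<le> L i0" unfolding L_def using q0 i0 by (intro lq_ge_abs) auto
      also have "L i0 \<le> C" unfolding C_def using i0 finO L0 by (intro member_le_sum) (auto simp: Oc_def)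
      finally show ?thesis using i0 by simp
    qed
    have ydict: "(\<Sum>i<n. t i) = y"
      using opt unfolding lq_l1_optimal_def dict_apply_def t_def by simp
    have zeq: "(\<Sum>i\<in>\<Lambda>. s i) = (\<Sum>i\<in>Oc. t i)"
    proof -
      have "(\<Sum>i<n. t i) = (\<Sum>i\<in>Oc. t i) + (\<Sum>i\<in>\<Lambda>. t i)"
        unfolding Oc_def using Lam(1) by (intro sum.subset_diff) auto
      then show ?thesis using ydict s0(2) unfolding s_def by (simp add: sum_subtractf algebra_simps)
    qed
    define z where "z = (\<Sum>i\<in>Oc. t i)"
    have Sge: "norm (s i) \<le> S" if "i \<in> \<Lambda>" for i
      unfolding S_def using finL that by (intro member_le_sum) auto
    have perI: "norm (s i) \<le> mu * (sqrt (1 + sg) * C + S - norm (s i))" if i: "i \<in> \<Lambda>" for i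
    proof -
      have iN: "i < n" using i Lam(1) by auto
      have in1: "\<bar>s i \<bullet> z\<bar> \<le> mu * norm (s i) * (sqrt (1 + sg) * C)"
      proof -
        have "\<bar>s i \<bullet> z\<bar> = \<bar>\<Sum>j\<in>Oc. s i \<bullet> t j\<bar>" unfolding z_def by (simp add: inner_sum_right)
        also have "\<dots> \<le> (\<Sum>j\<in>Oc. \<bar>s i \<bullet> t j\<bar>)" by (rule sum_abs)
        also have "\<dots> \<le> (\<Sum>j\<in>Oc. mu * norm (s i) * (sqrt (1 + sg) * L j))"
        proof (rule sum_mono)
          fix j assume j: "j \<in> Oc"
          have jn: "j < n" "i \<noteq> j" using j i unfolding Oc_def by auto
          have "\<bar>s i \<bullet> t j\<bar> \<le> mu * norm (s i) * norm (t j)"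
            unfolding mu_def using iN jn s_span[OF i] t_span by (intro mu_bound) auto
          also have "\<dots> \<le> mu * norm (s i) * (sqrt (1 + sg) * L j)"
            using t_norm[OF jn(1)] mu0 by (intro mult_left_mono) auto
          finally show "\<bar>s i \<bullet> t j\<bar> \<le> mu * norm (s i) * (sqrt (1 + sg) * L j)" .
        qed
        also have "\<dots> = mu * norm (s i) * (sqrt (1 + sg) * C)"
          unfolding C_def by (simp add: sum_distrib_left)
        finally show ?thesis .
      qed
      have in2: "\<bar>s i \<bullet> (\<Sum>l\<in>\<Lambda> - {i}. s l)\<bar> \<le> mu * norm (s i) * (S - norm (s i))"
      proof -
        have "\<bar>s i \<bullet> (\<Sum>l\<in>\<Lambda> - {i}. s l)\<bar> = \<bar>\<Sum>l\<in>\<Lambda> - {i}. s i \<bullet> s l\<bar>"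
          by (simp add: inner_sum_right)
        also have "\<dots> \<le> (\<Sum>l\<in>\<Lambda> - {i}. \<bar>s i \<bullet> s l\<bar>)" by (rule sum_abs)
        also have "\<dots> \<le> (\<Sum>l\<in>\<Lambda> - {i}. mu * norm (s i) * norm (s l))"
        proof (rule sum_mono)
          fix l assume l: "l \<in> \<Lambda> - {i}"
          then have "l < n" "i \<noteq> l" "l \<in> \<Lambda>" using Lam(1) by auto
          then show "\<bar>s i \<bullet> s l\<bar> \<le> mu * norm (s i) * norm (s l)"
            unfolding mu_def using iN s_span i by (intro mu_bound) auto
        qed
        also have "\<dots> = mu * norm (s i) * (S - norm (s i))"
          unfolding S_def using finL i by (simp add: sum_distrib_left[symmetric] sum_diff1 right_diff_distrib)
        finally show ?thesis .
      qed
      have "z = s i + (\<Sum>l\<in>\<Lambda> - {i}. s l)"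
        unfolding z_def zeq[symmetric] using finL i by (simp add: sum.remove)
      then have "s i \<bullet> z = (norm (s i))\<^sup>2 + s i \<bullet> (\<Sum>l\<in>\<Lambda> - {i}. s l)"
        by (simp add: inner_add_right power2_norm_eq_inner)
      then have "(norm (s i))\<^sup>2 \<le> \<bar>s i \<bullet> z\<bar> + \<bar>s i \<bullet> (\<Sum>l\<in>\<Lambda> - {i}. s l)\<bar>" by linarith
      also have "\<dots> \<le> norm (s i) * (mu * (sqrt (1 + sg) * C + S - norm (s i)))"
        using in1 in2 by (simp add: algebra_simps)
      finally have sq: "norm (s i) * norm (s i) \<le> norm (s i) * (mu * (sqrt (1 + sg) * C + S - norm (s i)))"
        by (simp add: power2_eq_square)
      show ?thesis
      proof (cases "norm (s i) = 0")
        case True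
        have "0 \<le> sqrt (1 + sg) * C" using sg0 Cpos by simp
        then show ?thesis using True mu0 Sge[OF i] by simp
      next
        case False
        then have "norm (s i) > 0" by simp
        then show ?thesis using sq by simp
      qed
    qed
    have sumI: "S \<le> mu * (real k * (sqrt (1 + sg) * C + S) - S)"
    proof -
      have "S \<le> (\<Sum>i\<in>\<Lambda>. mu * (sqrt (1 + sg) * C + S - norm (s i)))"
        unfolding S_def by (rule sum_mono) (rule perI[unfolded S_def])
      also have "\<dots> = mu * (real k * (sqrt (1 + sg) * C + S) - S)"
        using Lam(2) unfolding S_def by (simp add: sum_distrib_left[symmetric] sum_subtractf)
      finally show ?thesis .
    qed
    have Sd: "S * (1 - (real k - 1) * mu) \<le> real k * mu * sqrt (1 + sg) * C"
    proof -
      have e1: "S * (1 - (real k - 1) * mu) = S - mu * (real k * S) + mu * S" by (simp add: algebra_simps)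
      have e2: "mu * (real k * (sqrt (1 + sg) * C + S) - S) = real k * mu * sqrt (1 + sg) * C + mu * (real k * S) - mu * S"
        by (simp add: algebra_simps)
      have "S \<le> real k * mu * sqrt (1 + sg) * C + mu * (real k * S) - mu * S" using sumI e2 by simp
      then show ?thesis unfolding e1 by simp
    qed
    define al where "al = real k * mu * sqrt (1 + sg) / (1 - (real k - 1) * mu)"
    have al0: "0 \<le> al" unfolding al_def using mu0 sg0 kr(2) by simp
    have alb: "al < sqrt (1 - ep)" unfolding al_def using kr(2,3) by (simp add: divide_less_eq)
    have SalC: "S \<le> al * C"
    proof -
      have "S \<le> real k * mu * sqrt (1 + sg) * C / (1 - (real k - 1) * mu)"
        using Sd kr(2) by (simp add: pos_le_divide_eq)
      then show ?thesis unfolding al_def by simp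
    qed
    have "al\<^sup>2 < (sqrt (1 - ep))\<^sup>2" using al0 alb by (intro power_strict_mono) auto
    then have "ep < 1 - al\<^sup>2" using kr(1) by simp
    then obtain e where e: "e \<in> epsset q n m B" "e < 1 - al\<^sup>2"
      using eps_approx[OF unit q0] unfolding ep_def by blast
    have he: "0 < 1 - e" using e(2) by (smt (verit) zero_le_power2)
    have ale: "al < sqrt (1 - e)" using e(2) by (intro real_less_rsqrt) simp
    have Sless: "S < sqrt (1 - e) * C"
      using SalC mult_strict_right_mono[OF ale Cpos] by linarith
    have "\<forall>i\<in>{..<n}. \<exists>J. J \<subseteq> {..<m i} \<and> card J = dim (block_span B m i)
            \<and> (\<forall>c :: nat \<Rightarrow> real. (\<Sum>j\<in>J. c j *\<^sub>R B i j) = 0 \<longrightarrow> (\<forall>j\<in>J. c j = 0))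
            \<and> (\<forall>c :: nat \<Rightarrow> real.
                 (1 - e) * (lq_norm q J c)\<^sup>2 \<le> (norm (\<Sum>j\<in>J. c j *\<^sub>R B i j))\<^sup>2
               \<and> (norm (\<Sum>j\<in>J. c j *\<^sub>R B i j))\<^sup>2 \<le> (1 + e) * (lq_norm q J c)\<^sup>2)"
      using e(1) unfolding epsset_def by auto
    from bchoice[OF this] obtain Jf where Jf: "\<forall>i\<in>{..<n}. Jf i \<subseteq> {..<m i} \<and> card (Jf i) = dim (block_span B m i)
            \<and> (\<forall>c :: nat \<Rightarrow> real. (\<Sum>j\<in>Jf i. c j *\<^sub>R B i j) = 0 \<longrightarrow> (\<forall>j\<in>Jf i. c j = 0))
            \<and> (\<forall>c :: nat \<Rightarrow> real.
                 (1 - e) * (lq_norm q (Jf i) c)\<^sup>2 \<le> (norm (\<Sum>j\<in>Jf i. c j *\<^sub>R B i j))\<^sup>2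
               \<and> (norm (\<Sum>j\<in>Jf i. c j *\<^sub>R B i j))\<^sup>2 \<le> (1 + e) * (lq_norm q (Jf i) c)\<^sup>2)"
      by blast
    have "\<forall>i\<in>\<Lambda>. \<exists>g. (\<Sum>j\<in>Jf i. g j *\<^sub>R B i j) = s i"
    proof
      fix i assume i: "i \<in> \<Lambda>"
      then have "i \<in> {..<n}" using Lam(1) by auto
      then show "\<exists>g. (\<Sum>j\<in>Jf i. g j *\<^sub>R B i j) = s i"
        using Jf s_span[OF i] by (intro basis_span) auto
    qed
    from bchoice[OF this] obtain gf where gf: "\<forall>i\<in>\<Lambda>. (\<Sum>j\<in>Jf i. gf i j *\<^sub>R B i j) = s i" by blast
    have JfS: "Jf i \<subseteq> {..<m i}" if "i \<in> \<Lambda>" for i using Jf that Lam(1) by auto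
    have glow: "lq_norm q (Jf i) (gf i) \<le> norm (s i) / sqrt (1 - e)" if i: "i \<in> \<Lambda>" for i
    proof -
      have "(1 - e) * (lq_norm q (Jf i) (gf i))\<^sup>2 \<le> (norm (s i))\<^sup>2"
        using Jf gf i Lam(1) by (metis lessThan_iff subsetD)
      then have "sqrt ((1 - e) * (lq_norm q (Jf i) (gf i))\<^sup>2) \<le> sqrt ((norm (s i))\<^sup>2)"
        by (rule real_sqrt_le_mono)
      then have "sqrt (1 - e) * lq_norm q (Jf i) (gf i) \<le> norm (s i)"
        by (simp add: real_sqrt_mult lq_nonneg)
      then show ?thesis using he by (simp add: pos_le_divide_eq mult.commute)
    qed
    define G where "G i j = (if j \<in> Jf i then gf i j else 0)" for i j
    define c' where "c' i j = (if i \<in> \<Lambda> then c i j + G i j else 0)" for i j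
    have Gsum: "(\<Sum>j<m i. G i j *\<^sub>R B i j) = s i" if i: "i \<in> \<Lambda>" for i
    proof -
      have "(\<Sum>j<m i. G i j *\<^sub>R B i j) = (\<Sum>j<m i. if j \<in> Jf i then gf i j *\<^sub>R B i j else 0)"
        unfolding G_def by (rule sum.cong) auto
      also have "\<dots> = (\<Sum>j\<in>{..<m i} \<inter> Jf i. gf i j *\<^sub>R B i j)"
        by (rule sum.inter_restrict[symmetric]) simp
      also have "{..<m i} \<inter> Jf i = Jf i" using JfS[OF i] by auto
      finally show ?thesis using gf i by simp
    qed
    have inner: "(\<Sum>j<m i. c' i j *\<^sub>R B i j) = (if i \<in> \<Lambda> then s0 i else 0)" for i
    proof (cases "i \<in> \<Lambda>")
      case True
      have "(\<Sum>j<m i. c' i j *\<^sub>R B i j) = t i + (\<Sum>j<m i. G i j *\<^sub>R B i j)"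
        unfolding c'_def t_def using True by (simp add: scaleR_add_left sum.distrib)
      then show ?thesis using Gsum[OF True] True unfolding s_def by simp
    qed (simp add: c'_def)
    have dict': "dict_apply n m B c' = y"
    proof -
      have "dict_apply n m B c' = (\<Sum>i<n. if i \<in> \<Lambda> then s0 i else 0)"
        unfolding dict_apply_def using inner by simp
      also have "\<dots> = (\<Sum>i\<in>{..<n} \<inter> \<Lambda>. s0 i)" by (rule sum.inter_restrict[symmetric]) simp
      also have "{..<n} \<inter> \<Lambda> = \<Lambda>" using Lam(1) by auto
      finally show ?thesis using s0(2) by simp
    qed
    have objle: "lq_norm q {..<m i} (c' i) \<le> (if i \<in> \<Lambda> then L i + norm (s i) / sqrt (1 - e) else 0)" for i
    proof (cases "i \<in> \<Lambda>")
      case True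
      have "lq_norm q {..<m i} (c' i) = lq_norm q {..<m i} (\<lambda>j. c i j + G i j)"
        unfolding c'_def using True by simp
      also have "\<dots> \<le> L i + lq_norm q {..<m i} (G i)"
        unfolding L_def using q by (intro lq_minkowski) auto
      also have "lq_norm q {..<m i} (G i) = lq_norm q (Jf i) (G i)"
        using JfS[OF True] by (intro lq_subset) (auto simp: G_def)
      also have "\<dots> = lq_norm q (Jf i) (gf i)" by (intro lq_cong) (simp add: G_def)
      also have "\<dots> \<le> norm (s i) / sqrt (1 - e)" by (rule glow[OF True])
      finally show ?thesis using True by simp
    next
      case False
      then show ?thesis unfolding c'_def by (simp add: lq_zero)
    qed
    have "(\<Sum>i<n. lq_norm q {..<m i} (c' i)) \<le> (\<Sum>i<n. if i \<in> \<Lambda> then L i + norm (s i) / sqrt (1 - e) else 0)"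
      by (rule sum_mono) (rule objle)
    also have "\<dots> = (\<Sum>i\<in>{..<n} \<inter> \<Lambda>. L i + norm (s i) / sqrt (1 - e))"
      by (rule sum.inter_restrict[symmetric]) simp
    also have "{..<n} \<inter> \<Lambda> = \<Lambda>" using Lam(1) by auto
    also have "(\<Sum>i\<in>\<Lambda>. L i + norm (s i) / sqrt (1 - e)) = (\<Sum>i\<in>\<Lambda>. L i) + S / sqrt (1 - e)"
      unfolding S_def by (simp add: sum.distrib sum_divide_distrib)
    also have "\<dots> < (\<Sum>i\<in>\<Lambda>. L i) + C"
    proof -
      have "S / sqrt (1 - e) < C" using Sless he by (simp add: divide_less_eq mult.commute)
      then show ?thesis by simp
    qed
    also have "\<dots> = (\<Sum>i<n. L i)"
    proof -
      have "(\<Sum>i<n. L i) = (\<Sum>i\<in>Oc. L i) + (\<Sum>i\<in>\<Lambda>. L i)"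
        unfolding Oc_def using Lam(1) by (intro sum.subset_diff) auto
      then show ?thesis unfolding C_def by simp
    qed
    finally have lt: "(\<Sum>i<n. lq_norm q {..<m i} (c' i)) < (\<Sum>i<n. L i)" .
    have "(\<Sum>i<n. L i) \<le> (\<Sum>i<n. lq_norm q {..<m i} (c' i))"
      using opt dict' unfolding lq_l1_optimal_def L_def by blast
    then show False using lt by simp
  qed
qed


end
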